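(* Let $A=[a_1,\dots,a_N]$ and $B=[b_1,\dots,b_N]$ be $N\times N$ complex matrices, $\theta$ a real parameter, and $m_k(\theta)=(1-\theta)a_k+\theta b_k$ the $k$-th column of $(1-\theta)A+\theta B$. Define recursively $z_1=v_1=m_1$ and, for $k\ge2$, \[ v_k=m_k-\sum_{j=1}^{k-1}\frac{\langle z_j,m_k\rangle}{\|z_j\|^2}\,z_j,\qquad z_k=\Big(\prod_{j=1}^{k-1}\|z_j\|^2\Big)\Big\{m_k-\sum_{j=1}^{k-1}\frac{\langle z_j,m_k\rangle z_j}{\|z_j\|^2}\Big\}. \] Then for each $k\in\{1,\dots,N\}$, $z_k$ equals $v_k$ multiplied by a polynomial in $\theta$ of degree at most $D_k=3^{k-1}-1$ (its denominator), and every entry of $z_k(\theta)$ is a polynomial in $\theta$ of degree at most $D_k+1=3^{k-1}$.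
   Context: $\langle x,y\rangle=\sum_i\overline{x_i}y_i$ is the standard inner product on $\mathbb{C}^N$ and $\|x\|^2=\langle x,x\rangle$; for real $\theta$ these are polynomials in $\theta$ with complex coefficients. *)

theory Defs
  imports "HOL-Computational_Algebra.Polynomial" Complex_Main
begin

text \<open>Vectors of \<open>\<complex>^N\<close> are functions \<open>nat \<Rightarrow> complex\<close>, components indexed by \<open>{1..N}\<close>.
  An \<open>N\<times>N\<close> matrix \<open>A\<close> is \<open>nat \<Rightarrow> nat \<Rightarrow> complex\<close>, entry \<open>A i k\<close> = row i, column k (1-based).\<close>

definition cinner :: "nat \<Rightarrow> (nat \<Rightarrow> complex) \<Rightarrow> (nat \<Rightarrow> complex) \<Rightarrow> complex" where
  "cinner N x y = (\<Sum>i\<in>{1..N}. cnj (x i) * y i)"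

definition cnorm2 :: "nat \<Rightarrow> (nat \<Rightarrow> complex) \<Rightarrow> complex" where
  "cnorm2 N x = cinner N x x"

definition mcol :: "(nat \<Rightarrow> nat \<Rightarrow> complex) \<Rightarrow> (nat \<Rightarrow> nat \<Rightarrow> complex) \<Rightarrow> nat \<Rightarrow> real \<Rightarrow> (nat \<Rightarrow> complex)" where
  "mcol A B k \<theta> = (\<lambda>i. (1 - complex_of_real \<theta>) * A i k + complex_of_real \<theta> * B i k)"

function zvec :: "nat \<Rightarrow> (nat \<Rightarrow> nat \<Rightarrow> complex) \<Rightarrow> (nat \<Rightarrow> nat \<Rightarrow> complex) \<Rightarrow> nat \<Rightarrow> real \<Rightarrow> (nat \<Rightarrow> complex)" where
  "zvec N A B k \<theta> = (\<lambda>i. (\<Prod>j\<in>{1..<k}. cnorm2 N (zvec N A B j \<theta>)) *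
      (mcol A B k \<theta> i - (\<Sum>j\<in>{1..<k}. cinner N (zvec N A B j \<theta>) (mcol A B k \<theta>)
                          / cnorm2 N (zvec N A B j \<theta>) * zvec N A B j \<theta> i)))"
  by pat_completeness auto
termination by (relation "measure (\<lambda>(N,A,B,k,\<theta>). k)") auto

definition vvec :: "nat \<Rightarrow> (nat \<Rightarrow> nat \<Rightarrow> complex) \<Rightarrow> (nat \<Rightarrow> nat \<Rightarrow> complex) \<Rightarrow> nat \<Rightarrow> real \<Rightarrow> (nat \<Rightarrow> complex)" where
  "vvec N A B k \<theta> = (\<lambda>i. mcol A B k \<theta> i - (\<Sum>j\<in>{1..<k}. cinner N (zvec N A B j \<theta>) (mcol A B k \<theta>)
                          / cnorm2 N (zvec N A B j \<theta>) * zvec N A B j \<theta> i))"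

end

theory Submission
  imports Defs
begin

declare zvec.simps[simp del]

definition pf :: "nat \<Rightarrow> (real \<Rightarrow> complex) \<Rightarrow> bool" where
  "pf d f \<longleftrightarrow> (\<exists>q::complex poly. degree q \<le> d \<and> (\<forall>\<theta>. f \<theta> = poly q (complex_of_real \<theta>)))"

lemma pf_mono: "pf d f \<Longrightarrow> d \<le> d' \<Longrightarrow> pf d' f"
  unfolding pf_def by (meson order_trans)

lemma pf_const: "pf 0 (\<lambda>_. c)"
  unfolding pf_def by (rule exI[of _ "[:c:]"]) simp

lemma pf_id: "pf 1 (\<lambda>\<theta>. complex_of_real \<theta>)"
  unfolding pf_def by (rule exI[of _ "[:0,1:]"]) simp

lemma pf_add: "pf d f \<Longrightarrow> pf d g \<Longrightarrow> pf d (\<lambda>\<theta>. f \<theta> + g \<theta>)"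
  unfolding pf_def
proof (elim exE conjE)
  fix p q assume "degree p \<le> d" "\<forall>\<theta>. f \<theta> = poly p (complex_of_real \<theta>)"
    "degree q \<le> d" "\<forall>\<theta>. g \<theta> = poly q (complex_of_real \<theta>)"
  then show "\<exists>r. degree r \<le> d \<and> (\<forall>\<theta>. f \<theta> + g \<theta> = poly r (complex_of_real \<theta>))"
    by (intro exI[of _ "p + q"]) (simp add: degree_add_le)
qed

lemma pf_diff: "pf d f \<Longrightarrow> pf d g \<Longrightarrow> pf d (\<lambda>\<theta>. f \<theta> - g \<theta>)"
  unfolding pf_def
proof (elim exE conjE)
  fix p q assume "degree p \<le> d" "\<forall>\<theta>. f \<theta> = poly p (complex_of_real \<theta>)"
    "degree q \<le> d" "\<forall>\<theta>. g \<theta> = poly q (complex_of_real \<theta>)"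
  then show "\<exists>r. degree r \<le> d \<and> (\<forall>\<theta>. f \<theta> - g \<theta> = poly r (complex_of_real \<theta>))"
    by (intro exI[of _ "p - q"]) (simp add: degree_diff_le)
qed

lemma pf_mult: "pf d f \<Longrightarrow> pf e g \<Longrightarrow> pf (d + e) (\<lambda>\<theta>. f \<theta> * g \<theta>)"
  unfolding pf_def
proof (elim exE conjE)
  fix p q assume "degree p \<le> d" "\<forall>\<theta>. f \<theta> = poly p (complex_of_real \<theta>)"
    "degree q \<le> e" "\<forall>\<theta>. g \<theta> = poly q (complex_of_real \<theta>)"
  then show "\<exists>r. degree r \<le> d + e \<and> (\<forall>\<theta>. f \<theta> * g \<theta> = poly r (complex_of_real \<theta>))"
    by (intro exI[of _ "p * q"]) (simp add: order_trans[OF degree_mult_le] add_mono)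
qed

lemma pf_cnj: "pf d f \<Longrightarrow> pf d (\<lambda>\<theta>. cnj (f \<theta>))"
  unfolding pf_def
proof (elim exE conjE)
  fix p assume "degree p \<le> d" "\<forall>\<theta>. f \<theta> = poly p (complex_of_real \<theta>)"
  then show "\<exists>r. degree r \<le> d \<and> (\<forall>\<theta>. cnj (f \<theta>) = poly r (complex_of_real \<theta>))"
    by (intro exI[of _ "map_poly cnj p"]) (simp add: degree_map_poly)
qed

lemma pf_sum: "finite S \<Longrightarrow> (\<And>x. x \<in> S \<Longrightarrow> pf d (f x)) \<Longrightarrow> pf d (\<lambda>\<theta>. \<Sum>x\<in>S. f x \<theta>)"
proof (induction S rule: finite_induct)
  case empty
  then show ?case using pf_mono[OF pf_const[of 0]] by simp
next
  case (insert x F)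
  then show ?case using pf_add[of d "f x" "\<lambda>\<theta>. \<Sum>x\<in>F. f x \<theta>"] by simp
qed

lemma pf_prod: "finite S \<Longrightarrow> (\<And>x. x \<in> S \<Longrightarrow> pf (d x) (f x)) \<Longrightarrow> pf (\<Sum>x\<in>S. d x) (\<lambda>\<theta>. \<Prod>x\<in>S. f x \<theta>)"
proof (induction S rule: finite_induct)
  case empty
  then show ?case using pf_const[of 1] by simp
next
  case (insert x F)
  then show ?case using pf_mult[of "d x" "f x" "\<Sum>x\<in>F. d x" "\<lambda>\<theta>. \<Prod>x\<in>F. f x \<theta>"] by simp
qed

lemma sum_pow3: "(\<Sum>j\<in>{1..<k}. 2 * 3 ^ (j - 1) :: nat) = 3 ^ (k - 1) - 1"
proof (induction k)
  case 0 then show ?case by simp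
next
  case (Suc k)
  show ?case
  proof (cases "k = 0")
    case True then show ?thesis by simp
  next
    case False
    then have "{1..<Suc k} = insert k {1..<k}" by auto
    then have "(\<Sum>j\<in>{1..<Suc k}. 2 * 3 ^ (j - 1) :: nat) = 2 * 3^(k-1) + (3 ^ (k - 1) - 1)"
      using Suc by simp
    also have "\<dots> = 3 ^ (Suc k - 1) - 1" using False
      by (cases k) auto
    finally show ?thesis .
  qed
qed

lemma cnorm2_zero:
  assumes "cnorm2 N x = 0" and "i \<in> {1..N}" shows "x i = 0"
proof -
  have "cnorm2 N x = complex_of_real (\<Sum>i\<in>{1..N}. (cmod (x i))^2)"
    unfolding cnorm2_def cinner_def by (simp only: of_real_sum complex_norm_square mult.commute[of "cnj _"])
  then have "(\<Sum>i\<in>{1..N}. (cmod (x i))^2) = 0" using assms(1) by (metis of_real_eq_0_iff)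
  then have "(cmod (x i))^2 = 0" using assms(2)
    by (subst (asm) sum_nonneg_eq_0_iff) auto
  then show ?thesis by simp
qed

lemma cinner_zero: "cnorm2 N x = 0 \<Longrightarrow> cinner N x y = 0"
  unfolding cinner_def using cnorm2_zero[of N x] by simp

lemma zvec_expand:
  "zvec N A B k \<theta> i = (\<Prod>j\<in>{1..<k}. cnorm2 N (zvec N A B j \<theta>)) * mcol A B k \<theta> i
     - (\<Sum>j\<in>{1..<k}. (\<Prod>l\<in>{1..<k}-{j}. cnorm2 N (zvec N A B l \<theta>)) *
          cinner N (zvec N A B j \<theta>) (mcol A B k \<theta>) * zvec N A B j \<theta> i)"
proof -
  let ?n = "\<lambda>j. cnorm2 N (zvec N A B j \<theta>)"
  let ?c = "\<lambda>j. cinner N (zvec N A B j \<theta>) (mcol A B k \<theta>)"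
  have t: "(\<Prod>j\<in>{1..<k}. ?n j) * (?c j / ?n j * zvec N A B j \<theta> i)
      = (\<Prod>l\<in>{1..<k}-{j}. ?n l) * ?c j * zvec N A B j \<theta> i" if "j \<in> {1..<k}" for j
  proof (cases "?n j = 0")
    case True
    then show ?thesis using cinner_zero[OF True] by simp
  next
    case False
    have "(\<Prod>j\<in>{1..<k}. ?n j) = ?n j * (\<Prod>l\<in>{1..<k}-{j}. ?n l)"
      using that by (simp add: prod.remove)
    then show ?thesis using False by (simp add: field_simps)
  qed
  have s: "(\<Sum>j\<in>{1..<k}. (\<Prod>j\<in>{1..<k}. ?n j) * (?c j / ?n j * zvec N A B j \<theta> i))
      = (\<Sum>j\<in>{1..<k}. (\<Prod>l\<in>{1..<k}-{j}. ?n l) * ?c j * zvec N A B j \<theta> i)"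
    by (rule sum.cong[OF refl t])
  show ?thesis
    apply (subst zvec.simps)
    unfolding right_diff_distrib sum_distrib_left s by (rule refl)
qed

lemma mcol_pf: "pf 1 (\<lambda>\<theta>. mcol A B k \<theta> i)"
proof -
  have e: "(\<lambda>\<theta>. mcol A B k \<theta> i) = (\<lambda>\<theta>. A i k + complex_of_real \<theta> * (B i k - A i k))"
    unfolding mcol_def by (auto simp: algebra_simps)
  have "pf 1 (\<lambda>\<theta>. complex_of_real \<theta> * (B i k - A i k))"
    using pf_mult[OF pf_id pf_const] by simp
  moreover have "pf 1 (\<lambda>\<theta>. A i k)" using pf_mono[OF pf_const] by simp
  ultimately show ?thesis unfolding e by (rule pf_add[rotated])
qed

lemma zvec_pf: "pf (3^(k-1)) (\<lambda>\<theta>. zvec N A B k \<theta> i)"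
proof (induction k arbitrary: i rule: less_induct)
  case (less k)
  let ?S = "{1..<k}"
  have nrm: "pf (2*3^(j-1)) (\<lambda>\<theta>. cnorm2 N (zvec N A B j \<theta>))" if "j \<in> ?S" for j
  proof -
    have "pf (3^(j-1)+3^(j-1)) (\<lambda>\<theta>. \<Sum>i\<in>{1..N}. cnj (zvec N A B j \<theta> i) * zvec N A B j \<theta> i)"
      using that by (intro pf_sum pf_mult pf_cnj less) auto
    then show ?thesis unfolding cnorm2_def cinner_def by (simp add: mult_2)
  qed
  have P: "pf (3^(k-1)) (\<lambda>\<theta>. (\<Prod>j\<in>?S. cnorm2 N (zvec N A B j \<theta>)) * mcol A B k \<theta> i)"
  proof -
    have "pf ((\<Sum>j\<in>?S. 2*3^(j-1)) + 1) (\<lambda>\<theta>. (\<Prod>j\<in>?S. cnorm2 N (zvec N A B j \<theta>)) * mcol A B k \<theta> i)"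
      by (intro pf_mult pf_prod mcol_pf nrm) auto
    then show ?thesis unfolding sum_pow3 by simp
  qed
  have T: "pf (3^(k-1)) (\<lambda>\<theta>. (\<Prod>l\<in>?S-{j}. cnorm2 N (zvec N A B l \<theta>)) *
          cinner N (zvec N A B j \<theta>) (mcol A B k \<theta>) * zvec N A B j \<theta> i)" if j: "j \<in> ?S" for j
  proof -
    have c: "pf (3^(j-1)+1) (\<lambda>\<theta>. cinner N (zvec N A B j \<theta>) (mcol A B k \<theta>))"
      unfolding cinner_def using j by (intro pf_sum pf_mult pf_cnj less mcol_pf) auto
    have "pf ((\<Sum>l\<in>?S-{j}. 2*3^(l-1)) + (3^(j-1)+1) + 3^(j-1)) (\<lambda>\<theta>. (\<Prod>l\<in>?S-{j}. cnorm2 N (zvec N A B l \<theta>)) *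
          cinner N (zvec N A B j \<theta>) (mcol A B k \<theta>) * zvec N A B j \<theta> i)"
      using j by (intro pf_mult pf_prod c nrm less) auto
    moreover have "(\<Sum>l\<in>?S. 2*3^(l-1)::nat) = 2*3^(j-1) + (\<Sum>l\<in>?S-{j}. 2*3^(l-1))"
      using j by (simp add: sum.remove)
    ultimately show ?thesis unfolding sum_pow3
      by (smt (verit) add.commute add.left_commute le_add_diff_inverse le_refl mult_2 one_le_numeral one_le_power pf_mono)
  qed
  have "pf (3^(k-1)) (\<lambda>\<theta>. (\<Prod>j\<in>?S. cnorm2 N (zvec N A B j \<theta>)) * mcol A B k \<theta> i
     - (\<Sum>j\<in>?S. (\<Prod>l\<in>?S-{j}. cnorm2 N (zvec N A B l \<theta>)) *
          cinner N (zvec N A B j \<theta>) (mcol A B k \<theta>) * zvec N A B j \<theta> i))"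
    by (intro pf_diff P pf_sum T) auto
  then show ?case by (subst zvec_expand) simp
qed

theorem corollary6:
  fixes N :: nat and A B :: "nat \<Rightarrow> nat \<Rightarrow> complex" and k :: nat
  assumes "1 \<le> k" and "k \<le> N"
  shows "(\<exists>p :: complex poly. degree p \<le> 3 ^ (k - 1) - 1 \<and>
            (\<forall>\<theta>::real. poly p (complex_of_real \<theta>) = (\<Prod>j\<in>{1..<k}. cnorm2 N (zvec N A B j \<theta>)) \<and>
                        (\<forall>i. zvec N A B k \<theta> i = poly p (complex_of_real \<theta>) * vvec N A B k \<theta> i)))
       \<and> (\<forall>i\<in>{1..N}. \<exists>q :: complex poly. degree q \<le> 3 ^ (k - 1) \<and>
            (\<forall>\<theta>::real. zvec N A B k \<theta> i = poly q (complex_of_real \<theta>)))"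
proof
  have nrm: "pf (2*3^(j-1)) (\<lambda>\<theta>. cnorm2 N (zvec N A B j \<theta>))" for j
  proof -
    have "pf (3^(j-1)+3^(j-1)) (\<lambda>\<theta>. \<Sum>i\<in>{1..N}. cnj (zvec N A B j \<theta> i) * zvec N A B j \<theta> i)"
      by (intro pf_sum pf_mult pf_cnj zvec_pf) auto
    then show ?thesis unfolding cnorm2_def cinner_def by (simp add: mult_2)
  qed
  have "pf (\<Sum>j\<in>{1..<k}. 2*3^(j-1)) (\<lambda>\<theta>. \<Prod>j\<in>{1..<k}. cnorm2 N (zvec N A B j \<theta>))"
    by (intro pf_prod nrm) auto
  then obtain p where p: "degree p \<le> 3 ^ (k - 1) - 1"
    "\<forall>\<theta>. (\<Prod>j\<in>{1..<k}. cnorm2 N (zvec N A B j \<theta>)) = poly p (complex_of_real \<theta>)"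
    unfolding pf_def sum_pow3 by blast
  show "\<exists>p :: complex poly. degree p \<le> 3 ^ (k - 1) - 1 \<and>
            (\<forall>\<theta>::real. poly p (complex_of_real \<theta>) = (\<Prod>j\<in>{1..<k}. cnorm2 N (zvec N A B j \<theta>)) \<and>
                        (\<forall>i. zvec N A B k \<theta> i = poly p (complex_of_real \<theta>) * vvec N A B k \<theta> i))"
    using p by (intro exI[of _ p]) (auto simp: vvec_def intro: zvec.simps[THEN fun_cong, THEN trans])
  show "\<forall>i\<in>{1..N}. \<exists>q :: complex poly. degree q \<le> 3 ^ (k - 1) \<and>
            (\<forall>\<theta>::real. zvec N A B k \<theta> i = poly q (complex_of_real \<theta>))"
    using zvec_pf unfolding pf_def by blast
qed

end
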